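(* Let $(X,d,\alpha)$ be a computable metric space, let $n\ge1$, and let $S$ be a semi-computable compact set in this space. Then (i) the set $\{l\in\mathbb N: \mathcal H_l \text{ covers } S\}$ is computably enumerable; (ii) the set $\{l\in\mathbb N:\text{the lower boundary of }\mathcal H_l\text{ covers }S\}$ is computably enumerable.
   Context: A computable metric space is a triple $(X,d,\alpha)$ where $(X,d)$ is a metric space and $\alpha=(\alpha_i)_{i\in\mathbb N}$ is a sequence with dense range in $(X,d)$ such that $(i,j)\mapsto d(\alpha_i,\alpha_j)$ is a computable function $\mathbb N^2\to\mathbb R$ (a function $g:\mathbb N^k\to\mathbb R$ is computable if there is a computable $G:\mathbb N^{k+1}\to\mathbb Q$ with $|g(x)-G(x,i)|<2^{-i}$ for all $x,i$). Fix a computable $q:\mathbb N\to\mathbb Q$ whose image is the set of positive rationals and computable $\tau_1,\tau_2:\mathbb N\to\mathbb N$ with $\{(\tau_1(i),\tau_2(i)):i\in\mathbb N\}=\mathbb N^2$; let $\lambda_i=\alpha_{\tau_1(i)}$, $\rho_i=q_{\tau_2(i)}$, $I_i=B(\lambda_i,\rho_i)$ (open ball). Fix computable $\sigma:\mathbb N^2\to\mathbb N$, $\eta:\mathbb N\to\mathbb N$ such that $\{(\sigma(j,0),\dots,\sigma(j,\eta(j))):j\in\mathbb N\}$ is the set of all nonempty finite sequences in $\mathbb N$; write $(j)_i=\sigma(j,i)$, $[j]=\{(j)_i:0\le i\le\eta(j)\}$ and $J_j=\bigcup_{i\in[j]}I_i$. $S$ is semi-computable compact if $S$ is compact and $\{j:S\subseteq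 J_j\}$ is computably enumerable. Fix a computable injection $\nu:\mathbb N^n\to\mathbb N$; for $l,j_1,\dots,j_n\in\mathbb N$ write $\widehat l=\tau_2(l)$ and $(l)_{j_1,\dots,j_n}=(\tau_1(l))_{\nu(j_1,\dots,j_n)}$. Let $\mathcal H_l$ be the function $\{0,\dots,\widehat l\}^n\to\mathcal P(X)$, $(j_1,\dots,j_n)\mapsto J_{(l)_{j_1,\dots,j_n}}$. Its lower boundary is the function $\{0,\dots,\widehat l\}^{n-1}\to\mathcal P(X)$, $(j_1,\dots,j_{n-1})\mapsto J_{(l)_{j_1,\dots,j_{n-1},0}}$. A function $g:A\to\mathcal P(X)$ covers $S$ if $S\subseteq\bigcup_{a\in A}g(a)$. *)

theory Defs
  imports "HOL-Analysis.Analysis"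
begin

datatype recf = Zero | Succ | Proj nat | Comp recf "recf list" | Prim recf recf | Mu recf

inductive reval :: "recf \<Rightarrow> nat list \<Rightarrow> nat \<Rightarrow> bool" where
  reval_zero: "reval Zero xs 0"
| reval_succ: "reval Succ (x # xs) (Suc x)"
| reval_proj: "i < length xs \<Longrightarrow> reval (Proj i) xs (xs ! i)"
| reval_comp: "length ys = length gs \<Longrightarrow> (\<forall>i<length gs. reval (gs ! i) xs (ys ! i))
      \<Longrightarrow> reval f ys z \<Longrightarrow> reval (Comp f gs) xs z"
| reval_prim0: "reval f xs z \<Longrightarrow> reval (Prim f g) (0 # xs) z"
| reval_primS: "reval (Prim f g) (m # xs) y \<Longrightarrow> reval g (m # y # xs) z
      \<Longrightarrow> reval (Prim f g) (Suc m # xs) z"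
| reval_mu: "reval f (m # xs) 0 \<Longrightarrow> (\<forall>k<m. \<exists>y. 0 < y \<and> reval f (k # xs) y)
      \<Longrightarrow> reval (Mu f) xs m"

definition comp_fn :: "nat \<Rightarrow> (nat list \<Rightarrow> nat) \<Rightarrow> bool" where
  "comp_fn k f \<longleftrightarrow> (\<exists>r. \<forall>xs. length xs = k \<longrightarrow> reval r xs (f xs))"

definition comp_rat :: "nat \<Rightarrow> (nat list \<Rightarrow> rat) \<Rightarrow> bool" where
  "comp_rat k F \<longleftrightarrow> (\<exists>a b c. comp_fn k a \<and> comp_fn k b \<and> comp_fn k c \<and>
      (\<forall>xs. length xs = k \<longrightarrow> F xs = (of_nat (a xs) - of_nat (b xs)) / of_nat (c xs + 1)))"

definition comp_real :: "nat \<Rightarrow> (nat list \<Rightarrow> real) \<Rightarrow> bool" where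
  "comp_real k g \<longleftrightarrow> (\<exists>G. comp_rat (Suc k) G \<and>
      (\<forall>xs i. length xs = k \<longrightarrow> \<bar>g xs - real_of_rat (G (xs @ [i]))\<bar> < (1/2) ^ i))"

definition ce :: "nat set \<Rightarrow> bool" where
  "ce A \<longleftrightarrow> (\<exists>r. A = {x. \<exists>y. reval r [x] y})"

definition comp_metric_space :: "(nat \<Rightarrow> 'a::metric_space) \<Rightarrow> bool" where
  "comp_metric_space \<alpha> \<longleftrightarrow> closure (range \<alpha>) = UNIV \<and>
      comp_real 2 (\<lambda>xs. dist (\<alpha> (xs ! 0)) (\<alpha> (xs ! 1)))"

definition I_ball :: "(nat \<Rightarrow> 'a::metric_space) \<Rightarrow> (nat \<Rightarrow> rat) \<Rightarrow> (nat \<Rightarrow> nat) \<Rightarrow> (nat \<Rightarrow> nat)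
    \<Rightarrow> nat \<Rightarrow> 'a set" where
  "I_ball \<alpha> q \<tau>1 \<tau>2 i = ball (\<alpha> (\<tau>1 i)) (real_of_rat (q (\<tau>2 i)))"

definition code_set :: "(nat \<Rightarrow> nat \<Rightarrow> nat) \<Rightarrow> (nat \<Rightarrow> nat) \<Rightarrow> nat \<Rightarrow> nat set" where
  "code_set \<sigma> \<eta> j = {\<sigma> j i | i. i \<le> \<eta> j}"

definition J_set :: "(nat \<Rightarrow> 'a::metric_space) \<Rightarrow> (nat \<Rightarrow> rat) \<Rightarrow> (nat \<Rightarrow> nat) \<Rightarrow> (nat \<Rightarrow> nat)
    \<Rightarrow> (nat \<Rightarrow> nat \<Rightarrow> nat) \<Rightarrow> (nat \<Rightarrow> nat) \<Rightarrow> nat \<Rightarrow> 'a set" where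
  "J_set \<alpha> q \<tau>1 \<tau>2 \<sigma> \<eta> j = (\<Union>i\<in>code_set \<sigma> \<eta> j. I_ball \<alpha> q \<tau>1 \<tau>2 i)"

definition semi_computable_compact :: "(nat \<Rightarrow> 'a::metric_space) \<Rightarrow> (nat \<Rightarrow> rat) \<Rightarrow> (nat \<Rightarrow> nat)
    \<Rightarrow> (nat \<Rightarrow> nat) \<Rightarrow> (nat \<Rightarrow> nat \<Rightarrow> nat) \<Rightarrow> (nat \<Rightarrow> nat) \<Rightarrow> 'a set \<Rightarrow> bool" where
  "semi_computable_compact \<alpha> q \<tau>1 \<tau>2 \<sigma> \<eta> S \<longleftrightarrow>
     compact S \<and> ce {j. S \<subseteq> J_set \<alpha> q \<tau>1 \<tau>2 \<sigma> \<eta> j}"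

definition covers :: "'b set \<Rightarrow> ('b \<Rightarrow> 'a set) \<Rightarrow> 'a set \<Rightarrow> bool" where
  "covers A g S \<longleftrightarrow> S \<subseteq> (\<Union>a\<in>A. g a)"

definition tuples :: "nat \<Rightarrow> nat \<Rightarrow> nat list set" where
  "tuples k m = {js. length js = k \<and> (\<forall>j\<in>set js. j \<le> m)}"

text \<open>H_l : {0..hat l}^n -> P(X), (j_1..j_n) |-> J_{(l)_{j_1..j_n}}, where
  (l)_{j_1..j_n} = (tau1 l)_{nu(j_1..j_n)} = sigma (tau1 l) (nu (j_1..j_n)).\<close>
definition H_fun :: "(nat \<Rightarrow> 'a::metric_space) \<Rightarrow> (nat \<Rightarrow> rat) \<Rightarrow> (nat \<Rightarrow> nat) \<Rightarrow> (nat \<Rightarrow> nat)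
    \<Rightarrow> (nat \<Rightarrow> nat \<Rightarrow> nat) \<Rightarrow> (nat \<Rightarrow> nat) \<Rightarrow> (nat list \<Rightarrow> nat) \<Rightarrow> nat \<Rightarrow> nat list \<Rightarrow> 'a set" where
  "H_fun \<alpha> q \<tau>1 \<tau>2 \<sigma> \<eta> \<nu> l js = J_set \<alpha> q \<tau>1 \<tau>2 \<sigma> \<eta> (\<sigma> (\<tau>1 l) (\<nu> js))"

definition H_lower :: "(nat \<Rightarrow> 'a::metric_space) \<Rightarrow> (nat \<Rightarrow> rat) \<Rightarrow> (nat \<Rightarrow> nat) \<Rightarrow> (nat \<Rightarrow> nat)
    \<Rightarrow> (nat \<Rightarrow> nat \<Rightarrow> nat) \<Rightarrow> (nat \<Rightarrow> nat) \<Rightarrow> (nat list \<Rightarrow> nat) \<Rightarrow> nat \<Rightarrow> nat list \<Rightarrow> 'a set" where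
  "H_lower \<alpha> q \<tau>1 \<tau>2 \<sigma> \<eta> \<nu> l js = J_set \<alpha> q \<tau>1 \<tau>2 \<sigma> \<eta> (\<sigma> (\<tau>1 l) (\<nu> (js @ [0])))"

end

theory Submission
  imports Defs
begin


inductive_cases revalE_Zero: "reval Zero xs y"
inductive_cases revalE_Succ: "reval Succ xs y"
inductive_cases revalE_Proj: "reval (Proj i) xs y"
inductive_cases revalE_Comp: "reval (Comp f gs) xs y"
inductive_cases revalE_Prim: "reval (Prim f g) xs y"
inductive_cases revalE_Mu: "reval (Mu f) xs y"

lemma reval_det: "reval r xs y \<Longrightarrow> reval r xs y' \<Longrightarrow> y = y'"
proof (induction arbitrary: y' rule: reval.induct)
  case (reval_zero xs) show ?case using reval_zero.prems by (rule revalE_Zero) auto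
next
  case (reval_succ x xs) show ?case using reval_succ.prems by (rule revalE_Succ) auto
next
  case (reval_proj i xs) show ?case using reval_proj.prems by (rule revalE_Proj) auto
next
  case (reval_comp ys gs xs f z)
  from reval_comp.prems obtain ys' where l: "length ys' = length gs"
    and a: "\<forall>i<length gs. reval (gs ! i) xs (ys' ! i)" and b: "reval f ys' y'"
    by (rule revalE_Comp) auto
  have "ys = ys'" using reval_comp.hyps(1) reval_comp.IH l a by (auto intro: nth_equalityI)
  then show ?case using reval_comp.IH b by auto
next
  case (reval_prim0 f xs z g)
  show ?case using reval_prim0.prems by (rule revalE_Prim) (use reval_prim0.IH in auto)
next
  case (reval_primS f g m xs y z)
  from reval_primS.prems obtain y2 where "reval (Prim f g) (m # xs) y2" "reval g (m # y2 # xs) y'"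
    by (rule revalE_Prim) auto
  then show ?case using reval_primS.IH by auto
next
  case (reval_mu f m xs)
  from reval_mu.prems obtain m' where e: "y' = m'" and a: "reval f (m' # xs) 0" and b: "\<forall>k<m'. \<exists>y. 0 < y \<and> reval f (k # xs) y"
    by (rule revalE_Mu) auto
  show ?case
  proof (rule linorder_cases[of m m'])
    assume "m < m'" then show ?thesis using b reval_mu.IH(1) by fastforce
  next
    assume "m' < m" then show ?thesis using a reval_mu.IH(2) by fastforce
  qed (simp add: e)
qed

lemma comp_cong: "comp_fn k f \<Longrightarrow> (\<And>xs. length xs = k \<Longrightarrow> f xs = g xs) \<Longrightarrow> comp_fn k g"
  unfolding comp_fn_def by metis

lemma comp_const: "comp_fn k (\<lambda>_. c)"
proof (induction c)
  case 0 then show ?case unfolding comp_fn_def by (auto intro: reval_zero)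
next
  case (Suc c)
  then obtain r where r: "\<forall>xs. length xs = k \<longrightarrow> reval r xs c" unfolding comp_fn_def by auto
  have "reval (Comp Succ [r]) xs (Suc c)" if "length xs = k" for xs
    by (rule reval_comp[where ys="[c]"]) (use r that in \<open>auto intro: reval_succ\<close>)
  then show ?case unfolding comp_fn_def by blast
qed

lemma comp_proj: "i < k \<Longrightarrow> comp_fn k (\<lambda>xs. xs ! i)"
  unfolding comp_fn_def by (auto intro!: exI[of _ "Proj i"] reval_proj)

lemma comp_succ: "comp_fn 1 (\<lambda>xs. Suc (xs ! 0))"
  unfolding comp_fn_def
  by (rule exI[of _ Succ]) (auto simp: length_Suc_conv intro: reval_succ)

lemma comp_comp: "comp_fn m g \<Longrightarrow> length fs = m \<Longrightarrow> (\<forall>f\<in>set fs. comp_fn k f)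
   \<Longrightarrow> comp_fn k (\<lambda>xs. g (map (\<lambda>f. f xs) fs))"
proof -
  assume g: "comp_fn m g" and l: "length fs = m" and fs: "\<forall>f\<in>set fs. comp_fn k f"
  obtain rg where rg: "\<forall>xs. length xs = m \<longrightarrow> reval rg xs (g xs)" using g unfolding comp_fn_def by auto
  from fs obtain R where R: "\<forall>f\<in>set fs. \<forall>xs. length xs = k \<longrightarrow> reval (R f) xs (f xs)"
    unfolding comp_fn_def by metis
  have "reval (Comp rg (map R fs)) xs (g (map (\<lambda>f. f xs) fs))" if "length xs = k" for xs
    by (rule reval_comp[where ys="map (\<lambda>f. f xs) fs"]) (use R rg l that in auto)
  then show ?thesis unfolding comp_fn_def by blast
qed

lemma comp_prim: "comp_fn k f \<Longrightarrow> comp_fn (Suc (Suc k)) g \<Longrightarrow>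
   comp_fn (Suc k) (\<lambda>xs. rec_nat (f (tl xs)) (\<lambda>m y. g (m # y # tl xs)) (hd xs))"
proof -
  assume f: "comp_fn k f" and g: "comp_fn (Suc (Suc k)) g"
  obtain rf where rf: "\<forall>xs. length xs = k \<longrightarrow> reval rf xs (f xs)" using f unfolding comp_fn_def by auto
  obtain rg where rg: "\<forall>xs. length xs = Suc (Suc k) \<longrightarrow> reval rg xs (g xs)" using g unfolding comp_fn_def by auto
  have "reval (Prim rf rg) (m # ys) (rec_nat (f ys) (\<lambda>m y. g (m # y # ys)) m)" if "length ys = k" for m ys
  proof (induction m)
    case 0 show ?case by (simp, rule reval_prim0) (use rf that in auto)
  next
    case (Suc m) show ?case by (simp, rule reval_primS[OF Suc]) (use rg that in auto)
  qed
  then have "reval (Prim rf rg) xs (rec_nat (f (tl xs)) (\<lambda>m y. g (m # y # tl xs)) (hd xs))"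
    if "length xs = Suc k" for xs using that by (cases xs) auto
  then show ?thesis unfolding comp_fn_def by blast
qed

lemma comp_mu: "comp_fn (Suc k) f \<Longrightarrow> (\<forall>xs. length xs = k \<longrightarrow> (\<exists>m. f (m # xs) = 0))
   \<Longrightarrow> comp_fn k (\<lambda>xs. LEAST m. f (m # xs) = 0)"
proof -
  assume f: "comp_fn (Suc k) f" and ex: "\<forall>xs. length xs = k \<longrightarrow> (\<exists>m. f (m # xs) = 0)"
  obtain rf where rf: "\<forall>xs. length xs = Suc k \<longrightarrow> reval rf xs (f xs)" using f unfolding comp_fn_def by auto
  have "reval (Mu rf) xs (LEAST m. f (m # xs) = 0)" if "length xs = k" for xs
  proof (rule reval_mu)
    from ex that obtain m where "f (m # xs) = 0" by auto
    then have "f ((LEAST m. f (m # xs) = 0) # xs) = 0" by (rule LeastI)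
    moreover have "reval rf ((LEAST m. f (m # xs) = 0) # xs) (f ((LEAST m. f (m # xs) = 0) # xs))"
      using rf that by simp
    ultimately show "reval rf ((LEAST m. f (m # xs) = 0) # xs) 0" by simp
    show "\<forall>j<(LEAST m. f (m # xs) = 0). \<exists>y>0. reval rf (j # xs) y"
    proof (intro allI impI)
      fix j assume "j < (LEAST m. f (m # xs) = 0)"
      then have "f (j # xs) \<noteq> 0" by (rule not_less_Least)
      moreover have "reval rf (j # xs) (f (j # xs))" using rf that by simp
      ultimately show "\<exists>y>0. reval rf (j # xs) y" by blast
    qed
  qed
  then show ?thesis unfolding comp_fn_def by blast
qed

lemma ce_preimage: "ce C \<Longrightarrow> comp_fn 1 (\<lambda>xs. h (xs ! 0)) \<Longrightarrow> ce {l. h l \<in> C}"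
proof -
  assume C: "ce C" and h: "comp_fn 1 (\<lambda>xs. h (xs ! 0))"
  obtain r where r: "C = {x. \<exists>y. reval r [x] y}" using C unfolding ce_def by auto
  obtain rh where rh: "\<forall>xs. length xs = 1 \<longrightarrow> reval rh xs (h (xs ! 0))" using h unfolding comp_fn_def by auto
  have rhl: "reval rh [l] (h l)" for l using rh by (metis One_nat_def length_Cons list.size(3) nth_Cons_0)
  have "(\<exists>y. reval (Comp r [rh]) [l] y) \<longleftrightarrow> h l \<in> C" for l
  proof
    assume "\<exists>y. reval (Comp r [rh]) [l] y"
    then obtain y where "reval (Comp r [rh]) [l] y" by blast
    then obtain ys where "length ys = 1" "reval rh [l] (ys ! 0)" "reval r ys y"
      by (rule revalE_Comp) auto
    moreover note rhl[of l]
    moreover have "ys ! 0 = h l" using reval_det calculation(2,4) by blast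
    ultimately show "h l \<in> C" using r by (auto simp: length_Suc_conv)
  next
    assume "h l \<in> C"
    then obtain y where "reval r [h l] y" using r by auto
    then have "reval (Comp r [rh]) [l] y"
      by (intro reval_comp[where ys="[h l]"]) (use rhl in auto)
    then show "\<exists>y. reval (Comp r [rh]) [l] y" by blast
  qed
  then show ?thesis unfolding ce_def by blast
qed



lemma comp_primI:
  assumes "comp_fn k f" "comp_fn kb g" "ka = Suc k" "kb = Suc (Suc k)"
    and h0: "\<And>ys. length ys = k \<Longrightarrow> h (0 # ys) = f ys"
    and hS: "\<And>m ys. length ys = k \<Longrightarrow> h (Suc m # ys) = g (m # h (m # ys) # ys)"
  shows "comp_fn ka h"
proof -
  have "comp_fn (Suc k) (\<lambda>xs. rec_nat (f (tl xs)) (\<lambda>m y. g (m # y # tl xs)) (hd xs))"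
    using comp_prim assms(1,2,4) by blast
  moreover have "rec_nat (f ys) (\<lambda>m y. g (m # y # ys)) m = h (m # ys)" if "length ys = k" for m ys
    by (induction m) (use h0 hS that in auto)
  ultimately show ?thesis using assms(3)
    by (auto elim!: comp_cong simp: length_Suc_conv)
qed

lemma comp_muI:
  assumes "comp_fn ka f" "ka = Suc k" "\<forall>xs. length xs = k \<longrightarrow> (\<exists>m. f (m # xs) = 0)"
    and "\<And>xs. length xs = k \<Longrightarrow> h xs = (LEAST m. f (m # xs) = 0)"
  shows "comp_fn k h"
  using comp_mu[of k f] assms by (auto elim!: comp_cong)

lemma comp1: "comp_fn 1 g \<Longrightarrow> comp_fn k f \<Longrightarrow> comp_fn k (\<lambda>xs. g [f xs])"
  using comp_comp[of 1 g "[f]" k] by simp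

lemma comp2: "comp_fn 2 g \<Longrightarrow> comp_fn k f1 \<Longrightarrow> comp_fn k f2 \<Longrightarrow> comp_fn k (\<lambda>xs. g [f1 xs, f2 xs])"
  using comp_comp[of 2 g "[f1, f2]" k] by simp

lemma comp_app1: "comp_fn 1 (\<lambda>ys. h (ys ! 0)) \<Longrightarrow> comp_fn k f \<Longrightarrow> comp_fn k (\<lambda>xs. h (f xs))"
  using comp1[of "\<lambda>ys. h (ys ! 0)" k f] by simp

lemma comp_app2: "comp_fn 2 (\<lambda>ys. s (ys ! 0) (ys ! 1)) \<Longrightarrow> comp_fn k f \<Longrightarrow> comp_fn k g
   \<Longrightarrow> comp_fn k (\<lambda>xs. s (f xs) (g xs))"
  using comp2[of "\<lambda>ys. s (ys ! 0) (ys ! 1)" k f g] by simp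

lemma comp_Suc: "comp_fn k f \<Longrightarrow> comp_fn k (\<lambda>xs. Suc (f xs))"
  using comp_app1[OF comp_succ] .

lemma comp_hd: "comp_fn (Suc k) hd"
proof (rule comp_cong[OF comp_proj[of 0 "Suc k"]])
  fix xs :: "nat list" assume "length xs = Suc k" then show "xs ! 0 = hd xs" by (cases xs) auto
qed simp

lemma comp_tl_nth: "i < k \<Longrightarrow> comp_fn (Suc k) (\<lambda>ys. tl ys ! i)"
  by (rule comp_cong[OF comp_proj[of "Suc i" "Suc k"]]) (auto simp: nth_tl)

lemma add2: "comp_fn 2 (\<lambda>xs. xs ! 0 + xs ! 1)"
proof (rule comp_primI[where k=1 and kb=3])
  show "comp_fn 1 (\<lambda>ys. ys ! 0)" by (rule comp_proj) simp
  show "comp_fn 3 (\<lambda>ys. Suc (ys ! 1))" by (rule comp_Suc, rule comp_proj) simp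
qed (auto simp: length_Suc_conv)

lemma comp_add: "comp_fn k f \<Longrightarrow> comp_fn k g \<Longrightarrow> comp_fn k (\<lambda>xs. f xs + g xs)"
  using comp_app2[OF add2] .

lemma mult2: "comp_fn 2 (\<lambda>xs. xs ! 0 * xs ! 1)"
proof (rule comp_primI[where k=1 and kb=3])
  show "comp_fn 1 (\<lambda>ys. 0)" by (rule comp_const)
  show "comp_fn 3 (\<lambda>ys. ys ! 2 + ys ! 1)" by (intro comp_add comp_proj) simp_all
qed (auto simp: length_Suc_conv)

lemma comp_mult: "comp_fn k f \<Longrightarrow> comp_fn k g \<Longrightarrow> comp_fn k (\<lambda>xs. f xs * g xs)"
  using comp_app2[OF mult2] .

lemma pred1: "comp_fn 1 (\<lambda>xs. xs ! 0 - 1)"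
  by (rule comp_primI[where k=0 and kb=2 and f="\<lambda>_. 0" and g="\<lambda>ys. ys ! 0"])
     (auto simp: comp_const comp_proj)

lemma comp_pred1: "comp_fn k f \<Longrightarrow> comp_fn k (\<lambda>xs. f xs - 1)"
  using comp_app1[OF pred1] .

lemma subr2: "comp_fn 2 (\<lambda>xs. xs ! 1 - xs ! 0)"
proof (rule comp_primI[where k=1 and kb=3])
  show "comp_fn 1 (\<lambda>ys. ys ! 0)" by (rule comp_proj) simp
  show "comp_fn 3 (\<lambda>ys. ys ! 1 - 1)" by (intro comp_pred1 comp_proj) simp
qed (auto simp: length_Suc_conv)

lemma comp_sub: "comp_fn k f \<Longrightarrow> comp_fn k g \<Longrightarrow> comp_fn k (\<lambda>xs. f xs - g xs)"
  using comp2[OF subr2, of k g f] by simp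

lemma powr2: "comp_fn 2 (\<lambda>xs. xs ! 1 ^ xs ! 0)"
proof (rule comp_primI[where k=1 and kb=3])
  show "comp_fn 1 (\<lambda>ys. 1)" by (rule comp_const)
  show "comp_fn 3 (\<lambda>ys. ys ! 1 * ys ! 2)" by (intro comp_mult comp_proj) simp_all
qed (auto simp: length_Suc_conv)

lemma comp_pow: "comp_fn k f \<Longrightarrow> comp_fn k g \<Longrightarrow> comp_fn k (\<lambda>xs. f xs ^ g xs)"
  using comp2[OF powr2, of k g f] by simp

lemma div_Suc_least: "(LEAST q. Suc x - Suc q * Suc y = 0) = x div Suc y"
proof (rule Least_equality)
  have e: "x div Suc y * Suc y + x mod Suc y = x" by (rule div_mult_mod_eq)
  have "x mod Suc y < Suc y" by (rule mod_less_divisor) simp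
  then have "Suc x \<le> x div Suc y * Suc y + Suc y" using e by linarith
  then show "Suc x - Suc (x div Suc y) * Suc y = 0" by (simp only: mult_Suc)
  fix q assume "Suc x - Suc q * Suc y = 0"
  then have "x < Suc q * Suc y" by simp
  then have "x div Suc y < Suc q" by (rule less_mult_imp_div_less)
  then show "x div Suc y \<le> q" by simp
qed

lemma divS2: "comp_fn 2 (\<lambda>xs. xs ! 0 div Suc (xs ! 1))"
proof (rule comp_muI[where ka=3 and f="\<lambda>ys. Suc (ys ! 1) - Suc (ys ! 0) * Suc (ys ! 2)"])
  show "comp_fn 3 (\<lambda>ys. Suc (ys ! 1) - Suc (ys ! 0) * Suc (ys ! 2))"
    by (intro comp_sub comp_mult comp_Suc comp_proj) simp_all
  show "\<forall>xs. length xs = 2 \<longrightarrow> (\<exists>m. Suc (((m # xs) ! 1)) - Suc ((m # xs) ! 0) * Suc ((m # xs) ! 2) = 0)"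
  proof (intro allI impI)
    fix xs :: "nat list"
    have "Suc (xs ! 0) \<le> Suc (xs ! 0) * Suc (xs ! 1)" by simp
    then show "\<exists>m. Suc (((m # xs) ! 1)) - Suc ((m # xs) ! 0) * Suc ((m # xs) ! 2) = 0"
      by (intro exI[of _ "xs ! 0"]) simp
  qed
  fix xs :: "nat list"
  show "xs ! 0 div Suc (xs ! 1) = (LEAST m. Suc ((m # xs) ! 1) - Suc ((m # xs) ! 0) * Suc ((m # xs) ! 2) = 0)"
    using div_Suc_least[of "xs ! 0" "xs ! 1"] by simp
qed simp

lemma comp_divS: "comp_fn k f \<Longrightarrow> comp_fn k g \<Longrightarrow> comp_fn k (\<lambda>xs. f xs div Suc (g xs))"
  using comp_app2[OF divS2] .

lemma comp_modS: "comp_fn k f \<Longrightarrow> comp_fn k g \<Longrightarrow> comp_fn k (\<lambda>xs. f xs mod Suc (g xs))"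
proof -
  assume a: "comp_fn k f" "comp_fn k g"
  have "comp_fn k (\<lambda>xs. f xs - Suc (g xs) * (f xs div Suc (g xs)))"
    by (intro comp_sub comp_mult comp_Suc comp_divS a)
  then show ?thesis by (rule comp_cong) (simp only: minus_mult_div_eq_mod)
qed

definition comp_pred :: "nat \<Rightarrow> (nat list \<Rightarrow> bool) \<Rightarrow> bool" where
  "comp_pred k P \<longleftrightarrow> comp_fn k (\<lambda>xs. if P xs then 1 else 0)"

lemma pred_eq: "comp_fn k f \<Longrightarrow> comp_fn k g \<Longrightarrow> comp_pred k (\<lambda>xs. f xs = g xs)"
proof -
  assume a: "comp_fn k f" "comp_fn k g"
  have "comp_fn k (\<lambda>xs. 1 - ((f xs - g xs) + (g xs - f xs)))"
    by (intro comp_sub comp_add comp_const a)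
  then show ?thesis unfolding comp_pred_def by (rule comp_cong) auto
qed

lemma pred_less: "comp_fn k f \<Longrightarrow> comp_fn k g \<Longrightarrow> comp_pred k (\<lambda>xs. f xs < g xs)"
proof -
  assume a: "comp_fn k f" "comp_fn k g"
  have "comp_fn k (\<lambda>xs. 1 - (1 - (g xs - f xs)))"
    by (intro comp_sub comp_const a)
  then show ?thesis unfolding comp_pred_def by (rule comp_cong) auto
qed

lemma pred_and: "comp_pred k P \<Longrightarrow> comp_pred k Q \<Longrightarrow> comp_pred k (\<lambda>xs. P xs \<and> Q xs)"
  unfolding comp_pred_def
proof -
  assume a: "comp_fn k (\<lambda>xs. if P xs then 1 else 0)" "comp_fn k (\<lambda>xs. if Q xs then 1 else 0)"
  have "comp_fn k (\<lambda>xs. (if P xs then 1 else 0) * (if Q xs then 1 else 0))" by (rule comp_mult[OF a])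
  then show "comp_fn k (\<lambda>xs. if P xs \<and> Q xs then 1 else 0)" by (rule comp_cong) simp
qed

lemma pred_not: "comp_pred k P \<Longrightarrow> comp_pred k (\<lambda>xs. \<not> P xs)"
  unfolding comp_pred_def by (rule comp_cong[OF comp_sub[OF comp_const]]) auto

lemma pred_or: "comp_pred k P \<Longrightarrow> comp_pred k Q \<Longrightarrow> comp_pred k (\<lambda>xs. P xs \<or> Q xs)"
  using pred_not[OF pred_and[OF pred_not pred_not], of k P Q] by simp

lemma comp_reidx: "comp_fn k f \<Longrightarrow> (\<forall>i<k. p i < k') \<Longrightarrow> comp_fn k' (\<lambda>xs. f (map (\<lambda>i. xs ! p i) [0..<k]))"
proof -
  assume a: "comp_fn k f" "\<forall>i<k. p i < k'"
  have "\<forall>h\<in>set (map (\<lambda>i xs. xs ! p i) [0..<k]). comp_fn k' h"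
    using a(2) by (auto intro: comp_proj)
  from comp_comp[OF a(1) _ this] show ?thesis by (simp add: comp_def)
qed

lemma map_drop2: "length ys = Suc (Suc k) \<Longrightarrow>
   map (\<lambda>i. ys ! (if i = 0 then 0 else Suc i)) [0..<Suc k] = ys ! 0 # drop 2 ys"
proof (rule nth_equalityI)
  assume l: "length ys = Suc (Suc k)"
  then show "length (map (\<lambda>i. ys ! (if i = 0 then 0 else Suc i)) [0..<Suc k]) = length (ys ! 0 # drop 2 ys)"
    by simp
  fix i assume "i < length (map (\<lambda>i. ys ! (if i = 0 then 0 else Suc i)) [0..<Suc k])"
  then have i: "i < Suc k" by simp
  have "map (\<lambda>i. ys ! (if i = 0 then 0 else Suc i)) [0..<Suc k] ! i = ys ! (if i = 0 then 0 else Suc i)"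
    using i by (simp del: upt_Suc)
  also have "\<dots> = (ys ! 0 # drop 2 ys) ! i"
    using i l by (cases i) (auto simp: nth_drop)
  finally show "map (\<lambda>i. ys ! (if i = 0 then 0 else Suc i)) [0..<Suc k] ! i = (ys ! 0 # drop 2 ys) ! i" .
qed

lemma map_nth_k: "length xs = k \<Longrightarrow> map (\<lambda>i. xs ! i) [0..<k] = xs"
  by (rule nth_equalityI) auto

lemma pred_bex0: "comp_pred (Suc k) (\<lambda>ys. P (hd ys) (tl ys)) \<Longrightarrow>
   comp_pred (Suc k) (\<lambda>ys. \<exists>u<hd ys. P u (tl ys))"
proof -
  assume a: "comp_pred (Suc k) (\<lambda>ys. P (hd ys) (tl ys))"
  have "comp_fn (Suc (Suc k)) (\<lambda>ys. (\<lambda>ys. if P (hd ys) (tl ys) then 1 else 0)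
          (map (\<lambda>i. ys ! (if i = 0 then 0 else Suc i)) [0..<Suc k]))"
    by (rule comp_reidx) (use a in \<open>auto simp: comp_pred_def\<close>)
  then have c: "comp_fn (Suc (Suc k)) (\<lambda>ys. if P (ys ! 0) (drop 2 ys) then 1 else 0)"
    by (rule comp_cong) (simp add: map_drop2 del: upt_Suc)
  have g: "comp_fn (Suc (Suc k)) (\<lambda>ys. 1 - (1 - ys ! 1) * (1 - (if P (ys ! 0) (drop 2 ys) then 1 else 0)))"
    by (intro comp_sub comp_mult comp_const comp_proj c) simp
  show ?thesis unfolding comp_pred_def
    by (rule comp_primI[OF comp_const[where k=k and c=0] g])  (auto simp: less_Suc_eq)
qed

lemma pred_bex: "comp_pred (Suc k) (\<lambda>ys. P (hd ys) (tl ys)) \<Longrightarrow> comp_fn k b \<Longrightarrow>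
   comp_pred k (\<lambda>xs. \<exists>u<b xs. P u xs)"
proof -
  assume a: "comp_pred (Suc k) (\<lambda>ys. P (hd ys) (tl ys))" and b: "comp_fn k b"
  have g: "comp_fn (Suc k) (\<lambda>ys. if \<exists>u<hd ys. P u (tl ys) then 1 else 0)"
    using pred_bex0[OF a] unfolding comp_pred_def .
  have "\<forall>h\<in>set (b # map (\<lambda>i xs. xs ! i) [0..<k]). comp_fn k h"
    using b by (auto intro: comp_proj)
  from comp_comp[OF g _ this] have "comp_fn k (\<lambda>xs. if \<exists>u<b xs. P u (map (\<lambda>i. xs ! i) [0..<k]) then 1 else 0)"
    by (simp add: comp_def)
  then show ?thesis unfolding comp_pred_def by (rule comp_cong) (simp add: map_nth_k)
qed

lemma pred_ball: "comp_pred (Suc k) (\<lambda>ys. P (hd ys) (tl ys)) \<Longrightarrow> comp_fn k b \<Longrightarrow>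
   comp_pred k (\<lambda>xs. \<forall>u<b xs. P u xs)"
proof -
  assume a: "comp_pred (Suc k) (\<lambda>ys. P (hd ys) (tl ys))" and b: "comp_fn k b"
  have "comp_pred k (\<lambda>xs. \<not> (\<exists>u<b xs. \<not> P u xs))"
    by (rule pred_not, rule pred_bex[OF _ b], rule pred_not[OF a])
  then show ?thesis by simp
qed



lemma pred_cong: assumes a: "comp_pred k P" and e: "\<And>xs. length xs = k \<Longrightarrow> P xs = Q xs" shows "comp_pred k Q"
  using a unfolding comp_pred_def by (rule comp_cong) (simp add: e)

lemma pred_bex': "comp_pred (Suc k) Q \<Longrightarrow> comp_fn k b \<Longrightarrow> (\<And>u xs. length xs = k \<Longrightarrow> Q (u # xs) = P u xs)
   \<Longrightarrow> comp_pred k (\<lambda>xs. \<exists>u<b xs. P u xs)"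
proof -
  assume a: "comp_pred (Suc k) Q" "comp_fn k b" and e: "\<And>u xs. length xs = k \<Longrightarrow> Q (u # xs) = P u xs"
  have "comp_pred (Suc k) (\<lambda>ys. Q (hd ys # tl ys))"
    by (rule pred_cong[OF a(1)]) (case_tac xs, auto)
  from pred_bex[OF this a(2)] show ?thesis by (rule pred_cong) (use e in auto)
qed

lemma pred_ball': "comp_pred (Suc k) Q \<Longrightarrow> comp_fn k b \<Longrightarrow> (\<And>u xs. length xs = k \<Longrightarrow> Q (u # xs) = P u xs)
   \<Longrightarrow> comp_pred k (\<lambda>xs. \<forall>u<b xs. P u xs)"
proof -
  assume a: "comp_pred (Suc k) Q" "comp_fn k b" and e: "\<And>u xs. length xs = k \<Longrightarrow> Q (u # xs) = P u xs"
  have "comp_pred (Suc k) (\<lambda>ys. Q (hd ys # tl ys))"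
    by (rule pred_cong[OF a(1)]) (case_tac xs, auto)
  from pred_ball[OF this a(2)] show ?thesis by (rule pred_cong) (use e in auto)
qed

lemma code_set_alt: "code_set \<sigma> \<eta> j = {\<sigma> j i | i. i < Suc (\<eta> j)}"
  unfolding code_set_def by (simp add: less_Suc_eq_le)

lemma cover_ce:
  fixes \<alpha> :: "nat \<Rightarrow> 'a::metric_space"
  assumes sigma_comp: "comp_fn 2 (\<lambda>xs. \<sigma> (xs ! 0) (xs ! 1))"
    and eta_comp: "comp_fn 1 (\<lambda>xs. \<eta> (xs ! 0))"
    and seq_enum: "range (\<lambda>j. map (\<sigma> j) [0..<Suc (\<eta> j)]) = {xs. xs \<noteq> []}"
    and S_scc: "ce {j. S \<subseteq> J_set \<alpha> q \<tau>1 \<tau>2 \<sigma> \<eta> j}"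
    and N_comp: "comp_fn 1 (\<lambda>xs. N (xs ! 0))"
    and N_pos: "\<forall>l. 0 < N l"
    and F_comp: "comp_fn 2 (\<lambda>xs. F (xs ! 0) (xs ! 1))"
  shows "ce {l. S \<subseteq> (\<Union>t<N l. J_set \<alpha> q \<tau>1 \<tau>2 \<sigma> \<eta> (F l t))}"
proof -
  define U where "U l = (\<Union>t<N l. code_set \<sigma> \<eta> (F l t))" for l
  define K where "K l = (LEAST k. code_set \<sigma> \<eta> k = U l)" for l
  have ex: "\<exists>k. code_set \<sigma> \<eta> k = U l" for l
  proof -
    have fin: "finite (U l)" unfolding U_def code_set_def by auto
    have "\<sigma> (F l 0) 0 \<in> U l" using N_pos unfolding U_def code_set_def by auto
    then have ne: "sorted_list_of_set (U l) \<noteq> []" using fin by auto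
    then have "sorted_list_of_set (U l) \<in> range (\<lambda>j. map (\<sigma> j) [0..<Suc (\<eta> j)])"
      unfolding seq_enum by simp
    then obtain k where "sorted_list_of_set (U l) = map (\<sigma> k) [0..<Suc (\<eta> k)]"
      by (rule rangeE)
    then have "map (\<sigma> k) [0..<Suc (\<eta> k)] = sorted_list_of_set (U l)" by simp
    then have "set (map (\<sigma> k) [0..<Suc (\<eta> k)]) = U l" using fin by (simp del: upt_Suc)
    moreover have "set (map (\<sigma> k) [0..<Suc (\<eta> k)]) = {\<sigma> k i | i. i < Suc (\<eta> k)}"
      by (auto simp del: upt_Suc)
    ultimately have "code_set \<sigma> \<eta> k = U l" unfolding code_set_alt by simp
    then show ?thesis by blast
  qed
  have KU: "code_set \<sigma> \<eta> (K l) = U l" for l unfolding K_def by (rule LeastI_ex[OF ex])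
  have J: "J_set \<alpha> q \<tau>1 \<tau>2 \<sigma> \<eta> (K l) = (\<Union>t<N l. J_set \<alpha> q \<tau>1 \<tau>2 \<sigma> \<eta> (F l t))" for l
    unfolding J_set_def KU U_def by (simp only: UN_UN_flatten)
  have setEq: "{l. S \<subseteq> (\<Union>t<N l. J_set \<alpha> q \<tau>1 \<tau>2 \<sigma> \<eta> (F l t))} = {l. K l \<in> {j. S \<subseteq> J_set \<alpha> q \<tau>1 \<tau>2 \<sigma> \<eta> j}}"
    using J by auto
  define P where "P k l \<longleftrightarrow> (\<forall>i<Suc (\<eta> k). \<exists>t<N l. \<exists>i'<Suc (\<eta> (F l t)). \<sigma> (F l t) i' = \<sigma> k i)
      \<and> (\<forall>t<N l. \<forall>i'<Suc (\<eta> (F l t)). \<exists>i<Suc (\<eta> k). \<sigma> k i = \<sigma> (F l t) i')" for k l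
  have PU: "P k l \<longleftrightarrow> code_set \<sigma> \<eta> k = U l" for k l
  proof -
    have mU: "x \<in> U l \<longleftrightarrow> (\<exists>t<N l. \<exists>i'<Suc (\<eta> (F l t)). \<sigma> (F l t) i' = x)" for x
      unfolding U_def code_set_alt by blast
    have mC: "x \<in> code_set \<sigma> \<eta> k \<longleftrightarrow> (\<exists>i<Suc (\<eta> k). \<sigma> k i = x)" for x
      unfolding code_set_alt by blast
    have 1: "code_set \<sigma> \<eta> k \<subseteq> U l \<longleftrightarrow> (\<forall>i<Suc (\<eta> k). \<sigma> k i \<in> U l)"
      unfolding code_set_alt by blast
    have 2: "U l \<subseteq> code_set \<sigma> \<eta> k \<longleftrightarrow> (\<forall>t<N l. \<forall>i'<Suc (\<eta> (F l t)). \<sigma> (F l t) i' \<in> code_set \<sigma> \<eta> k)"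
      unfolding U_def code_set_alt by blast
    show ?thesis unfolding P_def set_eq_subset 1 2 mU mC ..
  qed
  have sig: "comp_fn k f \<Longrightarrow> comp_fn k g \<Longrightarrow> comp_fn k (\<lambda>xs. \<sigma> (f xs) (g xs))" for k f g
    using comp_app2[OF sigma_comp] .
  have Fc: "comp_fn k f \<Longrightarrow> comp_fn k g \<Longrightarrow> comp_fn k (\<lambda>xs. F (f xs) (g xs))" for k f g
    using comp_app2[OF F_comp] .
  have etc: "comp_fn k f \<Longrightarrow> comp_fn k (\<lambda>xs. \<eta> (f xs))" for k f
    using comp_app1[OF eta_comp] .
  have Nc: "comp_fn k f \<Longrightarrow> comp_fn k (\<lambda>xs. N (f xs))" for k f
    using comp_app1[OF N_comp] .
  have A1: "comp_pred (Suc (Suc (Suc (Suc (Suc 0))))) (\<lambda>ys. \<sigma> (F (ys ! 4) (ys ! 1)) (ys ! 0) = \<sigma> (ys ! 3) (ys ! 2))"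
    by (intro pred_eq sig Fc comp_proj) simp_all
  have A2: "comp_pred (Suc (Suc (Suc (Suc 0)))) (\<lambda>ys. \<exists>i'<Suc (\<eta> (F (ys ! 3) (ys ! 0))). \<sigma> (F (ys ! 3) (ys ! 0)) i' = \<sigma> (ys ! 2) (ys ! 1))"
    by (rule pred_bex'[OF A1]) (intro comp_Suc etc Fc comp_proj, simp_all)
  have A3: "comp_pred (Suc (Suc (Suc 0))) (\<lambda>ys. \<exists>t<N (ys ! 2). \<exists>i'<Suc (\<eta> (F (ys ! 2) t)). \<sigma> (F (ys ! 2) t) i' = \<sigma> (ys ! 1) (ys ! 0))"
    by (rule pred_bex'[OF A2]) (intro Nc comp_proj, simp_all)
  have A4: "comp_pred (Suc (Suc 0)) (\<lambda>ys. \<forall>i<Suc (\<eta> (ys ! 0)). \<exists>t<N (ys ! 1). \<exists>i'<Suc (\<eta> (F (ys ! 1) t)). \<sigma> (F (ys ! 1) t) i' = \<sigma> (ys ! 0) i)"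
    by (rule pred_ball'[OF A3]) (intro comp_Suc etc comp_proj, simp_all)
  have B1: "comp_pred (Suc (Suc (Suc (Suc (Suc 0))))) (\<lambda>ys. \<sigma> (ys ! 3) (ys ! 0) = \<sigma> (F (ys ! 4) (ys ! 2)) (ys ! 1))"
    by (intro pred_eq sig Fc comp_proj) simp_all
  have B2: "comp_pred (Suc (Suc (Suc (Suc 0)))) (\<lambda>ys. \<exists>i<Suc (\<eta> (ys ! 2)). \<sigma> (ys ! 2) i = \<sigma> (F (ys ! 3) (ys ! 1)) (ys ! 0))"
    by (rule pred_bex'[OF B1]) (intro comp_Suc etc comp_proj, simp_all)
  have B3: "comp_pred (Suc (Suc (Suc 0))) (\<lambda>ys. \<forall>i'<Suc (\<eta> (F (ys ! 2) (ys ! 0))). \<exists>i<Suc (\<eta> (ys ! 1)). \<sigma> (ys ! 1) i = \<sigma> (F (ys ! 2) (ys ! 0)) i')"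
    by (rule pred_ball'[OF B2]) (intro comp_Suc etc Fc comp_proj, simp_all)
  have B4: "comp_pred (Suc (Suc 0)) (\<lambda>ys. \<forall>t<N (ys ! 1). \<forall>i'<Suc (\<eta> (F (ys ! 1) t)). \<exists>i<Suc (\<eta> (ys ! 0)). \<sigma> (ys ! 0) i = \<sigma> (F (ys ! 1) t) i')"
    by (rule pred_ball'[OF B3]) (intro Nc comp_proj, simp_all)
  have compP: "comp_pred 2 (\<lambda>ys. P (ys ! 0) (ys ! 1))"
    using pred_and[OF A4 B4] unfolding P_def numeral_2_eq_2 .
  have "comp_fn 1 (\<lambda>xs. K (xs ! 0))"
  proof (rule comp_muI[where ka=2 and f="\<lambda>ys. 1 - (if P (ys ! 0) (ys ! 1) then 1 else 0)"])
    show "comp_fn 2 (\<lambda>ys. 1 - (if P (ys ! 0) (ys ! 1) then 1 else 0))"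
      by (rule comp_sub[OF comp_const]) (use compP in \<open>simp add: comp_pred_def\<close>)
    show "\<forall>xs. length xs = 1 \<longrightarrow> (\<exists>m. (1::nat) - (if P ((m # xs) ! 0) ((m # xs) ! 1) then 1 else 0) = 0)"
    proof (intro allI impI)
      fix xs :: "nat list"
      obtain k where "code_set \<sigma> \<eta> k = U (xs ! 0)" using ex by blast
      then show "\<exists>m. (1::nat) - (if P ((m # xs) ! 0) ((m # xs) ! 1) then 1 else 0) = 0"
        by (intro exI[of _ k]) (simp add: PU)
    qed
    fix xs :: "nat list"
    show "K (xs ! 0) = (LEAST m. (1::nat) - (if P ((m # xs) ! 0) ((m # xs) ! 1) then 1 else 0) = 0)"
      unfolding K_def using PU by simp
  qed simp
  from ce_preimage[OF S_scc this] show ?thesis unfolding setEq .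
qed



fun digits :: "nat \<Rightarrow> nat \<Rightarrow> nat \<Rightarrow> nat list" where
  "digits 0 m t = []"
| "digits (Suc p) m t = t mod Suc m # digits p m (t div Suc m)"

lemma digits_length: "length (digits p m t) = p"
  by (induction p arbitrary: t) auto

lemma digits_nth: "i < p \<Longrightarrow> digits p m t ! i = t div Suc m ^ i mod Suc m"
proof (induction p arbitrary: t i)
  case 0 then show ?case by simp
next
  case (Suc p)
  show ?case
  proof (cases i)
    case 0 then show ?thesis by simp
  next
    case (Suc j)
    then have j: "j < p" using Suc.prems by simp
    have "digits (Suc p) m t ! i = digits p m (t div Suc m) ! j" using Suc by simp
    also have "\<dots> = t div Suc m div Suc m ^ j mod Suc m" using Suc.IH[OF j] .
    also have "t div Suc m div Suc m ^ j = t div Suc m ^ i"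
      unfolding Suc by (simp only: power_Suc div_mult2_eq)
    finally show ?thesis .
  qed
qed

lemma digits_le: "j \<in> set (digits p m t) \<Longrightarrow> j \<le> m"
  by (induction p arbitrary: t) (auto simp: less_Suc_eq_le)

lemma digits_surj: "js \<in> tuples p m \<Longrightarrow> \<exists>t<Suc m ^ p. digits p m t = js"
proof (induction p arbitrary: js)
  case 0 then show ?case by (simp add: tuples_def)
next
  case (Suc p)
  then obtain a js' where js: "js = a # js'" and a: "a \<le> m" and js': "js' \<in> tuples p m"
    by (cases js) (auto simp: tuples_def)
  from Suc.IH[OF js'] obtain t' where t': "t' < Suc m ^ p" "digits p m t' = js'" by blast
  define t where "t = a + Suc m * t'"
  have "t mod Suc m = a mod Suc m" unfolding t_def by (rule mod_mult_self2)
  then have "t mod Suc m = a" using a by simp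
  moreover have "t div Suc m = t' + a div Suc m" unfolding t_def by (rule div_mult_self2) simp
  then have "t div Suc m = t'" using a by simp
  moreover have "t < Suc m ^ Suc p"
  proof -
    have "Suc t' \<le> Suc m ^ p" using t' by simp
    then have "Suc m * Suc t' \<le> Suc m * Suc m ^ p" by (rule mult_le_mono2)
    then show ?thesis unfolding t_def using a by simp
  qed
  ultimately show ?case using js t' \<open>t mod Suc m = a\<close> by (intro exI[of _ t]) auto
qed

lemma digits_image: "digits p m ` {..<Suc m ^ p} = tuples p m"
proof
  show "digits p m ` {..<Suc m ^ p} \<subseteq> tuples p m"
    by (auto simp: tuples_def digits_length dest: digits_le)
  show "tuples p m \<subseteq> digits p m ` {..<Suc m ^ p}"
    using digits_surj by fastforce
qed

lemma dig_comp:
  assumes g: "comp_fn p g" and tau: "comp_fn 1 (\<lambda>xs. \<tau> (xs ! 0))"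
  shows "comp_fn 2 (\<lambda>ys. g (digits p (\<tau> (ys ! 0)) (ys ! 1)))"
proof -
  let ?fs = "map (\<lambda>i ys. ys ! 1 div Suc (Suc (\<tau> (ys ! 0)) ^ i - 1) mod Suc (\<tau> (ys ! 0))) [0..<p]"
  have "\<forall>f\<in>set ?fs. comp_fn 2 f"
  proof
    fix f assume "f \<in> set ?fs"
    then obtain i where f: "f = (\<lambda>ys. ys ! 1 div Suc (Suc (\<tau> (ys ! 0)) ^ i - 1) mod Suc (\<tau> (ys ! 0)))" by auto
    show "comp_fn 2 f" unfolding f
      by (intro comp_modS comp_divS comp_sub comp_pow comp_Suc comp_app1[OF tau] comp_const comp_proj) simp_all
  qed
  from comp_comp[OF g _ this] have "comp_fn 2 (\<lambda>ys. g (map (\<lambda>f. f ys) ?fs))" by simp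
  then show ?thesis
  proof (rule comp_cong)
    fix ys :: "nat list"
    have "map (\<lambda>f. f ys) ?fs = digits p (\<tau> (ys ! 0)) (ys ! 1)"
      by (rule nth_equalityI) (auto simp: digits_length digits_nth)
    then show "g (map (\<lambda>f. f ys) ?fs) = g (digits p (\<tau> (ys ! 0)) (ys ! 1))" by simp
  qed
qed



lemma part_ce:
  fixes \<alpha> :: "nat \<Rightarrow> 'a::metric_space"
  assumes sigma_comp: "comp_fn 2 (\<lambda>xs. \<sigma> (xs ! 0) (xs ! 1))"
    and eta_comp: "comp_fn 1 (\<lambda>xs. \<eta> (xs ! 0))"
    and seq_enum: "range (\<lambda>j. map (\<sigma> j) [0..<Suc (\<eta> j)]) = {xs. xs \<noteq> []}"
    and S_scc: "ce {j. S \<subseteq> J_set \<alpha> q \<tau>1 \<tau>2 \<sigma> \<eta> j}"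
    and tau1_comp: "comp_fn 1 (\<lambda>xs. \<tau>1 (xs ! 0))"
    and tau2_comp: "comp_fn 1 (\<lambda>xs. \<tau>2 (xs ! 0))"
    and g: "comp_fn p g"
  shows "ce {l. S \<subseteq> (\<Union>js\<in>tuples p (\<tau>2 l). J_set \<alpha> q \<tau>1 \<tau>2 \<sigma> \<eta> (\<sigma> (\<tau>1 l) (g js)))}"
proof -
  have N: "comp_fn 1 (\<lambda>xs. Suc (\<tau>2 (xs ! 0)) ^ p)"
    by (intro comp_pow comp_Suc comp_app1[OF tau2_comp] comp_proj comp_const) simp
  have F: "comp_fn 2 (\<lambda>xs. \<sigma> (\<tau>1 (xs ! 0)) (g (digits p (\<tau>2 (xs ! 0)) (xs ! 1))))"
    by (rule comp_app2[OF sigma_comp comp_app1[OF tau1_comp comp_proj] dig_comp[OF g tau2_comp]]) simp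
  have "ce {l. S \<subseteq> (\<Union>t<Suc (\<tau>2 l) ^ p. J_set \<alpha> q \<tau>1 \<tau>2 \<sigma> \<eta> (\<sigma> (\<tau>1 l) (g (digits p (\<tau>2 l) t))))}"
    using cover_ce[OF sigma_comp eta_comp seq_enum S_scc,
        of "\<lambda>l. Suc (\<tau>2 l) ^ p" "\<lambda>l t. \<sigma> (\<tau>1 l) (g (digits p (\<tau>2 l) t))"] N F by simp
  moreover have "(\<Union>t<Suc (\<tau>2 l) ^ p. J_set \<alpha> q \<tau>1 \<tau>2 \<sigma> \<eta> (\<sigma> (\<tau>1 l) (g (digits p (\<tau>2 l) t))))
      = (\<Union>js\<in>tuples p (\<tau>2 l). J_set \<alpha> q \<tau>1 \<tau>2 \<sigma> \<eta> (\<sigma> (\<tau>1 l) (g js)))" for l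
    unfolding digits_image[symmetric] by blast
  ultimately show ?thesis by simp
qed

theorem proposition5p3:
  fixes \<alpha> :: "nat \<Rightarrow> 'a::metric_space"
    and q :: "nat \<Rightarrow> rat"
    and \<tau>1 \<tau>2 \<eta> :: "nat \<Rightarrow> nat"
    and \<sigma> :: "nat \<Rightarrow> nat \<Rightarrow> nat"
    and \<nu> :: "nat list \<Rightarrow> nat"
    and n :: nat
    and S :: "'a set"
  assumes cms: "comp_metric_space \<alpha>"
    and q_comp: "comp_rat 1 (\<lambda>xs. q (xs ! 0))"
    and q_range: "range q = {r. 0 < r}"
    and tau1_comp: "comp_fn 1 (\<lambda>xs. \<tau>1 (xs ! 0))"
    and tau2_comp: "comp_fn 1 (\<lambda>xs. \<tau>2 (xs ! 0))"
    and tau_surj: "range (\<lambda>i. (\<tau>1 i, \<tau>2 i)) = UNIV"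
    and sigma_comp: "comp_fn 2 (\<lambda>xs. \<sigma> (xs ! 0) (xs ! 1))"
    and eta_comp: "comp_fn 1 (\<lambda>xs. \<eta> (xs ! 0))"
    and seq_enum: "range (\<lambda>j. map (\<sigma> j) [0..<Suc (\<eta> j)]) = {xs. xs \<noteq> []}"
    and nu_comp: "comp_fn n \<nu>"
    and nu_inj: "inj_on \<nu> {js. length js = n}"
    and n_pos: "1 \<le> n"
    and S_scc: "semi_computable_compact \<alpha> q \<tau>1 \<tau>2 \<sigma> \<eta> S"
  shows "ce {l. covers (tuples n (\<tau>2 l)) (H_fun \<alpha> q \<tau>1 \<tau>2 \<sigma> \<eta> \<nu> l) S}
       \<and> ce {l. covers (tuples (n - 1) (\<tau>2 l)) (H_lower \<alpha> q \<tau>1 \<tau>2 \<sigma> \<eta> \<nu> l) S}"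
proof
  have C: "ce {j. S \<subseteq> J_set \<alpha> q \<tau>1 \<tau>2 \<sigma> \<eta> j}"
    using S_scc unfolding semi_computable_compact_def by simp
  show "ce {l. covers (tuples n (\<tau>2 l)) (H_fun \<alpha> q \<tau>1 \<tau>2 \<sigma> \<eta> \<nu> l) S}"
    unfolding covers_def H_fun_def
    by (rule part_ce[OF sigma_comp eta_comp seq_enum C tau1_comp tau2_comp nu_comp])
  let ?fs = "map (\<lambda>i xs. xs ! i) [0..<n - 1] @ [\<lambda>_. 0]"
  have "\<forall>f\<in>set ?fs. comp_fn (n - 1) f" by (auto intro: comp_proj comp_const)
  from comp_comp[OF nu_comp _ this] n_pos
  have "comp_fn (n - 1) (\<lambda>xs. \<nu> (map (\<lambda>f. f xs) ?fs))" by simp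
  then have g: "comp_fn (n - 1) (\<lambda>js. \<nu> (js @ [0]))"
    by (rule comp_cong) (simp add: comp_def map_nth_k)
  show "ce {l. covers (tuples (n - 1) (\<tau>2 l)) (H_lower \<alpha> q \<tau>1 \<tau>2 \<sigma> \<eta> \<nu> l) S}"
    unfolding covers_def H_lower_def
    by (rule part_ce[OF sigma_comp eta_comp seq_enum C tau1_comp tau2_comp g])
qed

end
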